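(* Let $p$ be an odd prime and $\sim$ an equivalence relation on $\mathbb{Z}_p^\times$ such that $x \sim y$ and $x \neq y$ together imply $(-x) \sim (y-x)$. Let $S_1$ and $S_2$ each be obtained by adjoining $0$ to some equivalence class of $\sim$. Then either $S_1, S_2$ form a distinct difference system, or there exist $a \in S_1$ and $b \in S_2$ such that $\{x - a \mid x \in S_1\} = \{y - b \mid y \in S_2\}$.
   Context: Subsets $S_1,\ldots,S_k$ of an abelian group $A$ form a distinct difference system if: (i) for any $i,j$ and any $x,y \in S_i$, $z,w \in S_j$ with $x \neq y$ and $z \neq w$, the equation $x-y=z-w$ implies $x=z$ and $y=w$; (ii) each $S_i$ contains $0$ and at least one other element; (iii) $S_i \cap S_j = \{0\}$ for $i \neq j$. *)

theory Defs
  imports Main "HOL-Computational_Algebra.Primes"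
begin

text \<open>The group Z_p is represented by the integers 0..p-1 with arithmetic mod p;
  Z_p^* (the units) is {1..p-1}.\<close>

definition Zp :: "int \<Rightarrow> int set" where
  "Zp p = {0..<p}"

definition Zp_units :: "int \<Rightarrow> int set" where
  "Zp_units p = {1..<p}"

definition dds_mod :: "int \<Rightarrow> int set list \<Rightarrow> bool" where
  "dds_mod p Ss \<longleftrightarrow>
     (\<forall>i<length Ss. Ss ! i \<subseteq> Zp p) \<and>
     (\<forall>i<length Ss. \<forall>j<length Ss. \<forall>x\<in>Ss ! i. \<forall>y\<in>Ss ! i. \<forall>z\<in>Ss ! j. \<forall>w\<in>Ss ! j.
        x \<noteq> y \<and> z \<noteq> w \<and> (x - y) mod p = (z - w) mod p \<longrightarrow> x = z \<and> y = w) \<and>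
     (\<forall>i<length Ss. 0 \<in> Ss ! i \<and> (\<exists>x\<in>Ss ! i. x \<noteq> 0)) \<and>
     (\<forall>i<length Ss. \<forall>j<length Ss. i \<noteq> j \<longrightarrow> Ss ! i \<inter> Ss ! j = {0})"

end

theory Submission
  imports Defs "HOL-Number_Theory.Cong"
begin

lemma all2: "(\<forall>i<length [A, B]. P i) \<longleftrightarrow> P 0 \<and> P (Suc 0)"
  by (simp add: All_less_Suc conj_commute)

locale L =
  fixes p :: int and r :: "(int \<times> int) set"
  assumes pr: "prime p"
    and eq: "equiv (Zp_units p) r"
    and cl: "\<And>x y. (x, y) \<in> r \<Longrightarrow> x \<noteq> y \<Longrightarrow> ((- x) mod p, (y - x) mod p) \<in> r"
begin

lemma p1: "p > 1" using pr prime_gt_1_int by blast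

lemma modeq: "a \<in> {0..<p} \<Longrightarrow> b \<in> {0..<p} \<Longrightarrow> a mod p = b mod p \<Longrightarrow> a = b"
  by simp

lemma cls_sub: "C \<in> Zp_units p // r \<Longrightarrow> C \<subseteq> {1..<p}"
  using in_quotient_imp_subset[OF eq] unfolding Zp_units_def by blast

lemma cls_eq: "C \<in> Zp_units p // r \<Longrightarrow> x \<in> C \<Longrightarrow> C = r``{x}"
proof -
  assume C: "C \<in> Zp_units p // r" and x: "x \<in> C"
  obtain c where c: "C = r``{c}" using C by (rule quotientE)
  have "(c, x) \<in> r" using x c by simp
  then show ?thesis using c equiv_class_eq_iff[OF eq] by simp
qed

lemma cls_I: "u \<in> {1..<p} \<Longrightarrow> r``{u} \<in> Zp_units p // r"
  by (simp add: Zp_units_def quotientI)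

lemma cls_self: "u \<in> {1..<p} \<Longrightarrow> u \<in> r``{u}"
  using equiv_class_self[OF eq] by (simp add: Zp_units_def)

lemma inj_tr: "inj_on (\<lambda>y. (y - x) mod p) {0..<p}"
proof (rule inj_onI)
  fix a b assume a: "a \<in> {0..<p}" and b: "b \<in> {0..<p}" and h: "(a - x) mod p = (b - x) mod p"
  have "((a - x) + x) mod p = ((b - x) + x) mod p" using h by (metis mod_add_left_eq)
  then have "a mod p = b mod p" by simp
  then show "a = b" using a b by simp
qed

lemma neg_unit: "x \<in> {1..<p} \<Longrightarrow> (- x) mod p \<in> {1..<p} \<and> (- ((- x) mod p)) mod p = x"
proof -
  assume x: "x \<in> {1..<p}"
  have "(- x) mod p = p - x" using x by (simp add: zmod_zminus1_eq_if)
  moreover have "(- (p - x)) mod p = x"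
  proof -
    have "- (p - x) = x + (-1) * p" by simp
    then have "(- (p - x)) mod p = x mod p" by (simp only: mod_mult_self1)
    then show ?thesis using x by simp
  qed
  ultimately show ?thesis using x by auto
qed

lemma tr_sub:
  assumes C: "C \<in> Zp_units p // r" and x: "x \<in> C"
  shows "(\<lambda>y. (y - x) mod p) ` insert 0 C \<subseteq> insert 0 (r``{(- x) mod p})"
proof
  fix z assume "z \<in> (\<lambda>y. (y - x) mod p) ` insert 0 C"
  then obtain y where y: "y \<in> insert 0 C" and z: "z = (y - x) mod p" by blast
  have xu: "x \<in> {1..<p}" using cls_sub[OF C] x by blast
  show "z \<in> insert 0 (r``{(- x) mod p})"
  proof (cases "y = x")
    case True then show ?thesis using z by simp
  next
    case False
    show ?thesis
    proof (cases "y = 0")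
      case True
      then show ?thesis using z cls_self neg_unit[OF xu] by simp
    next
      case f2: False
      then have "y \<in> C" using y by simp
      then have "(x, y) \<in> r" using cls_eq[OF C x] by simp
      then show ?thesis using cl[of x y] False z by simp
    qed
  qed
qed

lemma fin: "finite (insert 0 C)" if "C \<in> Zp_units p // r" for C
  using cls_sub[OF that] by (meson finite_atLeastLessThan_int finite_insert finite_subset)

lemma sub0: "C \<in> Zp_units p // r \<Longrightarrow> insert 0 C \<subseteq> {0..<p}"
  using cls_sub p1 by fastforce

lemma card_le:
  assumes C: "C \<in> Zp_units p // r" and x: "x \<in> C"
  shows "card (insert 0 C) \<le> card (insert 0 (r``{(- x) mod p}))"
proof -
  have xu: "x \<in> {1..<p}" using cls_sub[OF C] x by blast
  have D: "r``{(- x) mod p} \<in> Zp_units p // r" using cls_I neg_unit[OF xu] by blast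
  have "card (insert 0 C) = card ((\<lambda>y. (y - x) mod p) ` insert 0 C)"
    using card_image[OF inj_on_subset[OF inj_tr sub0[OF C]]] by simp
  also have "\<dots> \<le> card (insert 0 (r``{(- x) mod p}))"
    by (rule card_mono[OF fin[OF D] tr_sub[OF C x]])
  finally show ?thesis .
qed

lemma tr_eq:
  assumes C: "C \<in> Zp_units p // r" and x: "x \<in> C"
  shows "(\<lambda>y. (y - x) mod p) ` insert 0 C = insert 0 (r``{(- x) mod p})"
proof -
  have xu: "x \<in> {1..<p}" using cls_sub[OF C] x by blast
  have D: "r``{(- x) mod p} \<in> Zp_units p // r" using cls_I neg_unit[OF xu] by blast
  have uD: "(- x) mod p \<in> r``{(- x) mod p}" using cls_self neg_unit[OF xu] by blast
  have "card (insert 0 (r``{(- x) mod p})) \<le> card (insert 0 (r``{(- ((- x) mod p)) mod p}))"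
    by (rule card_le[OF D uD])
  also have "r``{(- ((- x) mod p)) mod p} = C" using neg_unit[OF xu] cls_eq[OF C x] by simp
  finally have le: "card (insert 0 (r``{(- x) mod p})) \<le> card (insert 0 C)" .
  have "card (insert 0 C) = card ((\<lambda>y. (y - x) mod p) ` insert 0 C)"
    using card_image[OF inj_on_subset[OF inj_tr sub0[OF C]]] by simp
  then show ?thesis
    using card_subset_eq[OF fin[OF D] tr_sub[OF C x]] le card_le[OF C x] by linarith
qed

lemma tr_d:
  assumes C: "C \<in> Zp_units p // r" and y: "y \<in> insert 0 C"
    and d: "d \<in> (\<lambda>z. (z - y) mod p) ` insert 0 C" and d0: "d \<noteq> 0"
  shows "(\<lambda>z. (z - y) mod p) ` insert 0 C = insert 0 (r``{d})"
proof (cases "y = 0")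
  case True
  have id: "(\<lambda>z. (z - y) mod p) ` insert 0 C = insert 0 C"
  proof -
    have "\<And>z. z \<in> insert 0 C \<Longrightarrow> (z - y) mod p = z" using sub0[OF C] True by auto
    then show ?thesis by (simp add: image_cong)
  qed
  then have "d \<in> C" using d d0 by simp
  then show ?thesis using id cls_eq[OF C] by simp
next
  case False
  then have yC: "y \<in> C" using y by simp
  have E: "(\<lambda>z. (z - y) mod p) ` insert 0 C = insert 0 (r``{(- y) mod p})" by (rule tr_eq[OF C yC])
  have yu: "y \<in> {1..<p}" using cls_sub[OF C] yC by blast
  have D: "r``{(- y) mod p} \<in> Zp_units p // r" using cls_I neg_unit[OF yu] by blast
  have "d \<in> insert 0 (r``{(- y) mod p})" using d by (simp only: E)
  then have "d \<in> r``{(- y) mod p}" using d0 by simp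
  then show ?thesis using E cls_eq[OF D] by simp
qed

lemma full:
  assumes C: "C \<in> Zp_units p // r" and y: "y \<in> insert 0 C" and w: "w \<in> insert 0 C"
    and ne: "y \<noteq> w"
    and E: "(\<lambda>z. (z - y) mod p) ` insert 0 C = (\<lambda>z. (z - w) mod p) ` insert 0 C"
  shows "{1..<p} \<subseteq> C"
proof -
  define S where "S = insert 0 C"
  define t where "t = y - w"
  have clos: "(s - t) mod p \<in> S" if s: "s \<in> S" for s
  proof -
    have "(s - y) mod p \<in> (\<lambda>z. (z - w) mod p) ` S" using E s S_def by blast
    then obtain s' where s': "s' \<in> S" "(s - y) mod p = (s' - w) mod p" by blast
    have "((s - y) + w) mod p = ((s' - w) + w) mod p" using s'(2) by (metis mod_add_left_eq)
    then have "(s - t) mod p = s' mod p" by (simp add: t_def algebra_simps)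
    also have "\<dots> = s'" using s'(1) sub0[OF C] S_def by auto
    finally show ?thesis using s'(1) by simp
  qed
  have ind: "(- (int k * t)) mod p \<in> S" for k :: nat
  proof (induction k)
    case 0 then show ?case by (simp add: S_def)
  next
    case (Suc k)
    have "((- (int k * t)) mod p - t) mod p \<in> S" using clos[OF Suc] .
    moreover have "((- (int k * t)) mod p - t) mod p = (- (int k * t) - t) mod p"
      by (simp add: mod_diff_left_eq)
    moreover have "- (int k * t) - t = - (int (Suc k) * t)" by (simp add: algebra_simps)
    ultimately show ?case by simp
  qed
  have "t mod p \<noteq> 0"
  proof
    assume "t mod p = 0"
    then have "y mod p = w mod p" unfolding t_def using mod_eq_dvd_iff mod_0_imp_dvd by blast
    then show False using ne y w sub0[OF C] modeq by blast
  qed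
  then have "\<not> p dvd t" by auto
  then have "coprime t p" using prime_imp_coprime[OF pr, of t] coprime_commute by blast
  then obtain v where v: "[t * v = 1] (mod p)" using cong_solve_coprime_int by blast
  show ?thesis
  proof
    fix u assume u: "u \<in> {1..<p}"
    define k where "k = nat ((- u * v) mod p)"
    have kk: "int k = (- u * v) mod p" using p1 by (simp add: k_def)
    have "(- (int k * t)) mod p = (- (((- u * v) mod p) * t)) mod p" by (simp add: kk)
    also have "\<dots> = (- ((- u * v) * t)) mod p" by (metis mod_minus_eq mod_mult_left_eq)
    also have "\<dots> = (u * (t * v)) mod p" by (simp add: algebra_simps)
    also have "\<dots> = (u * ((t * v) mod p)) mod p" by (simp add: mod_mult_right_eq)
    also have "\<dots> = (u * (1 mod p)) mod p" using v by (simp add: cong_def)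
    also have "\<dots> = (u * 1) mod p" by (rule mod_mult_right_eq)
    also have "\<dots> = u" using u by simp
    finally have "u \<in> S" using ind[of k] by simp
    then show "u \<in> C" using u S_def by simp
  qed
qed

lemma pair:
  assumes C: "C \<in> Zp_units p // r" and C': "C' \<in> Zp_units p // r"
    and x: "x \<in> insert 0 C" and y: "y \<in> insert 0 C" and z: "z \<in> insert 0 C'" and w: "w \<in> insert 0 C'"
    and xy: "x \<noteq> y" and h: "(x - y) mod p = (z - w) mod p"
  shows "(\<lambda>u. (u - y) mod p) ` insert 0 C = (\<lambda>u. (u - w) mod p) ` insert 0 C'"
proof -
  define d where "d = (x - y) mod p"
  have d0: "d \<noteq> 0"
  proof
    assume "d = 0"
    then have "x mod p = y mod p" unfolding d_def using mod_eq_dvd_iff mod_0_imp_dvd by blast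
    then show False using xy x y sub0[OF C] modeq by blast
  qed
  have d1: "d \<in> (\<lambda>u. (u - y) mod p) ` insert 0 C" using x d_def by blast
  have d2: "d \<in> (\<lambda>u. (u - w) mod p) ` insert 0 C'" using z d_def h by blast
  show ?thesis using tr_d[OF C y d1 d0] tr_d[OF C' w d2 d0] by simp
qed

lemma same:
  assumes C: "C \<in> Zp_units p // r" and C': "C' \<in> Zp_units p // r" and ne: "C \<noteq> C'"
    and x: "x \<in> insert 0 C" and y: "y \<in> insert 0 C" and z: "z \<in> insert 0 C" and w: "w \<in> insert 0 C"
    and xy: "x \<noteq> y" and h: "(x - y) mod p = (z - w) mod p"
  shows "x = z \<and> y = w"
proof -
  have E: "(\<lambda>u. (u - y) mod p) ` insert 0 C = (\<lambda>u. (u - w) mod p) ` insert 0 C"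
    by (rule pair[OF C C x y z w xy h])
  have yw: "y = w"
  proof (rule ccontr)
    assume "y \<noteq> w"
    then have "{1..<p} \<subseteq> C" using full[OF C y w _ E] by blast
    moreover have "C' \<subseteq> {1..<p}" "C' \<noteq> {}" using cls_sub[OF C'] in_quotient_imp_non_empty[OF eq C'] by auto
    ultimately have "C \<inter> C' \<noteq> {}" by blast
    then show False using quotient_disj[OF eq C C'] ne by blast
  qed
  then have "((x - y) + y) mod p = ((z - y) + y) mod p" using h by (metis mod_add_left_eq)
  then have "x mod p = z mod p" by simp
  then show ?thesis using yw x z sub0[OF C] modeq by blast
qed

end

theorem lemma3p27:
  fixes p :: int and r :: "(int \<times> int) set" and C1 C2 :: "int set"
  assumes "prime p" and "odd p"
    and "equiv (Zp_units p) r"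
    and "\<And>x y. (x, y) \<in> r \<Longrightarrow> x \<noteq> y \<Longrightarrow> ((- x) mod p, (y - x) mod p) \<in> r"
    and "C1 \<in> Zp_units p // r" and "C2 \<in> Zp_units p // r"
  shows "dds_mod p [insert 0 C1, insert 0 C2] \<or>
         (\<exists>a\<in>insert 0 C1. \<exists>b\<in>insert 0 C2.
            (\<lambda>x. (x - a) mod p) ` insert 0 C1 = (\<lambda>y. (y - b) mod p) ` insert 0 C2)"
proof -
  interpret L p r using assms by unfold_locales auto
  note C1 = assms(5) and C2 = assms(6)
  show ?thesis
  proof (cases "C1 = C2")
    case True
    show ?thesis
      by (rule disjI2, rule bexI[where x=0], rule bexI[where x=0]) (simp_all add: True)
  next
    case ne: False
    show ?thesis
    proof (cases "\<exists>a\<in>insert 0 C1. \<exists>b\<in>insert 0 C2.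
            (\<lambda>x. (x - a) mod p) ` insert 0 C1 = (\<lambda>y. (y - b) mod p) ` insert 0 C2")
      case True then show ?thesis by blast
    next
      case nt: False
      have nt': "(\<lambda>x. (x - a) mod p) ` insert 0 C1 \<noteq> (\<lambda>y. (y - b) mod p) ` insert 0 C2"
        if "a \<in> insert 0 C1" "b \<in> insert 0 C2" for a b
      proof
        assume E: "(\<lambda>x. (x - a) mod p) ` insert 0 C1 = (\<lambda>y. (y - b) mod p) ` insert 0 C2"
        have "\<exists>a\<in>insert 0 C1. \<exists>b\<in>insert 0 C2.
            (\<lambda>x. (x - a) mod p) ` insert 0 C1 = (\<lambda>y. (y - b) mod p) ` insert 0 C2"
          using that E by blast
        then show False using nt by (rule notE[rotated])
      qed
      have a1: "\<forall>i<length [insert 0 C1, insert 0 C2]. [insert 0 C1, insert 0 C2] ! i \<subseteq> Zp p"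
        using sub0[OF C1] sub0[OF C2] unfolding all2 by (simp add: Zp_def)
      have a3: "\<forall>i<length [insert 0 C1, insert 0 C2]. 0 \<in> [insert 0 C1, insert 0 C2] ! i \<and>
          (\<exists>x\<in>[insert 0 C1, insert 0 C2] ! i. x \<noteq> 0)"
      proof -
        obtain c1 where c1: "c1 \<in> C1" using in_quotient_imp_non_empty[OF eq C1] by blast
        obtain c2 where c2: "c2 \<in> C2" using in_quotient_imp_non_empty[OF eq C2] by blast
        have "c1 \<noteq> 0" "c2 \<noteq> 0" using c1 c2 cls_sub[OF C1] cls_sub[OF C2] by auto
        then show ?thesis unfolding all2 using c1 c2 by auto
      qed
      have a4: "\<forall>i<length [insert 0 C1, insert 0 C2]. \<forall>j<length [insert 0 C1, insert 0 C2].
          i \<noteq> j \<longrightarrow> [insert 0 C1, insert 0 C2] ! i \<inter> [insert 0 C1, insert 0 C2] ! j = {0}"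
        using quotient_disj[OF eq C1 C2] ne unfolding all2 by auto
      have a2: "\<forall>i<length [insert 0 C1, insert 0 C2]. \<forall>j<length [insert 0 C1, insert 0 C2].
          \<forall>x\<in>[insert 0 C1, insert 0 C2] ! i. \<forall>y\<in>[insert 0 C1, insert 0 C2] ! i.
          \<forall>z\<in>[insert 0 C1, insert 0 C2] ! j. \<forall>w\<in>[insert 0 C1, insert 0 C2] ! j.
        x \<noteq> y \<and> z \<noteq> w \<and> (x - y) mod p = (z - w) mod p \<longrightarrow> x = z \<and> y = w"
      proof (intro allI impI ballI)
        fix i j x y z w
        assume i: "i < length [insert 0 C1, insert 0 C2]" and j: "j < length [insert 0 C1, insert 0 C2]"
          and x: "x \<in> [insert 0 C1, insert 0 C2] ! i" and y: "y \<in> [insert 0 C1, insert 0 C2] ! i"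
          and z: "z \<in> [insert 0 C1, insert 0 C2] ! j" and w: "w \<in> [insert 0 C1, insert 0 C2] ! j"
          and h: "x \<noteq> y \<and> z \<noteq> w \<and> (x - y) mod p = (z - w) mod p"
        have hx: "x \<noteq> y" and hz: "z \<noteq> w" and he: "(x - y) mod p = (z - w) mod p" using h by auto
        consider "i = 0" "j = 0" | "i = 0" "j = 1" | "i = 1" "j = 0" | "i = 1" "j = 1"
          using i j by fastforce
        then show "x = z \<and> y = w"
        proof cases
          case 1
          then have "x \<in> insert 0 C1" "y \<in> insert 0 C1" "z \<in> insert 0 C1" "w \<in> insert 0 C1"
            using x y z w by simp_all
          then show ?thesis using same[OF C1 C2 ne _ _ _ _ hx he] by blast
        next
          case 2
          then have "x \<in> insert 0 C1" "y \<in> insert 0 C1" "z \<in> insert 0 C2" "w \<in> insert 0 C2"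
            using x y z w by simp_all
          then have "(\<lambda>u. (u - y) mod p) ` insert 0 C1 = (\<lambda>u. (u - w) mod p) ` insert 0 C2"
            using pair[OF C1 C2 _ _ _ _ hx he] by blast
          then show ?thesis using nt'[OF \<open>y \<in> insert 0 C1\<close> \<open>w \<in> insert 0 C2\<close>] by (rule notE[rotated])
        next
          case 3
          then have "x \<in> insert 0 C2" "y \<in> insert 0 C2" "z \<in> insert 0 C1" "w \<in> insert 0 C1"
            using x y z w by simp_all
          then have "(\<lambda>u. (u - y) mod p) ` insert 0 C2 = (\<lambda>u. (u - w) mod p) ` insert 0 C1"
            using pair[OF C2 C1 _ _ _ _ hx he] by blast
          then show ?thesis using nt'[OF \<open>w \<in> insert 0 C1\<close> \<open>y \<in> insert 0 C2\<close>] by (metis)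
        next
          case 4
          then have "x \<in> insert 0 C2" "y \<in> insert 0 C2" "z \<in> insert 0 C2" "w \<in> insert 0 C2"
            using x y z w by simp_all
          then show ?thesis using same[OF C2 C1 _ _ _ _ _ hx he] ne by blast
        qed
      qed
      show ?thesis unfolding dds_mod_def by (rule disjI1, intro conjI a1 a2 a3 a4)
    qed
  qed
qed

end
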